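(* Let $V=\{(a_1,a_2,\ldots)\mid a_i\in\mathbb{C},\ \sum_i|a_i|^2<\infty\}$ with quadratic form $f((a_i))=\sum_i a_i^2$ and associated bilinear form $f(u,v)=f(u+v)-f(u)-f(v)$, and let $Cl(V,f)$ be its Clifford algebra. For $v\in V$ let $v^{\perp}=\{v'\in V\mid f(v,v')=0\}$ and let $C(v)=\{a\in Cl(V,f)\mid va=av\}$. (A) If $v\in V$ and $f(v)=1$, then $C(v)=v\,Cl(v^{\perp},f)_{\bar0}+Cl(v^{\perp},f)_{\bar0}$. (B) Let $n$ be odd and, for $1\le i\le n$, let $v_i\in V$ be the sequence with $1$ in position $i$ and $0$ elsewhere. Then $$C(v_1)\cap\cdots\cap C(v_n)=v_1v_2\cdots v_n\,Cl(v_1^{\perp}\cap\cdots\cap v_n^{\perp},f)_{\bar0}+Cl(v_1^{\perp}\cap\cdots\cap v_n^{\perp},f)_{\bar0}.$$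
   Context: The Clifford algebra $Cl(V,f)$ is the unital associative $\mathbb{C}$-algebra generated by $V$ and $1$ subject to $v^2=f(v)\cdot1$ for $v\in V$. For a subspace $U\subseteq V$, $Cl(U,f)$ denotes the subalgebra generated by $1$ and $U$. $Cl(U,f)$ carries the natural $\mathbb{Z}/2\mathbb{Z}$-grading $Cl(U,f)=Cl(U,f)_{\bar0}+Cl(U,f)_{\bar1}$, where $Cl(U,f)_{\bar0}$ is spanned by all products of an even number of elements of $U$ (including the empty product $1$) and $Cl(U,f)_{\bar1}$ by all products of an odd number of elements of $U$. *)

theory Defs
  imports Complex_Main
begin

definition l2 :: "(nat \<Rightarrow> complex) set" where
  "l2 = {a. summable (\<lambda>i. (cmod (a i))\<^sup>2)}"

definition qf :: "(nat \<Rightarrow> complex) \<Rightarrow> complex" where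
  "qf a = (\<Sum>i. (a i)\<^sup>2)"

definition bf :: "(nat \<Rightarrow> complex) \<Rightarrow> (nat \<Rightarrow> complex) \<Rightarrow> complex" where
  "bf u v = qf (\<lambda>i. u i + v i) - qf u - qf v"

definition perp :: "(nat \<Rightarrow> complex) \<Rightarrow> (nat \<Rightarrow> complex) set" where
  "perp v = {w \<in> l2. bf v w = 0}"

definition smult_seq :: "complex \<Rightarrow> (nat \<Rightarrow> complex) \<Rightarrow> (nat \<Rightarrow> complex)" where
  "smult_seq c v = (\<lambda>i. c * v i)"

text \<open>Unit sequence with 1 in (0-based) position i; the paper's v_{i+1}.\<close>
definition unitseq :: "nat \<Rightarrow> (nat \<Rightarrow> complex)" where
  "unitseq i = (\<lambda>k. if k = i then 1 else 0)"

datatype cexp = Vec "nat \<Rightarrow> complex" | Scal complex | Add cexp cexp | Mul cexp cexp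

fun cl_wf :: "cexp \<Rightarrow> bool" where
  "cl_wf (Vec v) = (v \<in> l2)"
| "cl_wf (Scal c) = True"
| "cl_wf (Add x y) = (cl_wf x \<and> cl_wf y)"
| "cl_wf (Mul x y) = (cl_wf x \<and> cl_wf y)"

text \<open>The smallest congruence making the expressions a unital associative C-algebra
  (Scal c = c\<cdot>1, scalar multiplication c\<cdot>x = Mul (Scal c) x), in which Vec is linear on V
  and (Vec v)^2 = f(v)\<cdot>1 for v in V.  The quotient of the well-formed expressions is Cl(V,f).\<close>
inductive cl_rel :: "cexp \<Rightarrow> cexp \<Rightarrow> bool" where
  refl: "cl_rel x x"
| sym: "cl_rel x y \<Longrightarrow> cl_rel y x"
| trans: "cl_rel x y \<Longrightarrow> cl_rel y z \<Longrightarrow> cl_rel x z"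
| add_cong: "cl_rel x x' \<Longrightarrow> cl_rel y y' \<Longrightarrow> cl_rel (Add x y) (Add x' y')"
| mul_cong: "cl_rel x x' \<Longrightarrow> cl_rel y y' \<Longrightarrow> cl_rel (Mul x y) (Mul x' y')"
| add_assoc: "cl_rel (Add (Add x y) z) (Add x (Add y z))"
| add_comm: "cl_rel (Add x y) (Add y x)"
| add_zero: "cl_rel (Add x (Scal 0)) x"
| add_neg: "cl_rel (Add x (Mul (Scal (-1)) x)) (Scal 0)"
| mul_assoc: "cl_rel (Mul (Mul x y) z) (Mul x (Mul y z))"
| mul_one_l: "cl_rel (Mul (Scal 1) x) x"
| mul_one_r: "cl_rel (Mul x (Scal 1)) x"
| distrib_l: "cl_rel (Mul x (Add y z)) (Add (Mul x y) (Mul x z))"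
| distrib_r: "cl_rel (Mul (Add x y) z) (Add (Mul x z) (Mul y z))"
| scal_add: "cl_rel (Scal (a + b)) (Add (Scal a) (Scal b))"
| scal_mul: "cl_rel (Scal (a * b)) (Mul (Scal a) (Scal b))"
| scal_central: "cl_rel (Mul (Scal c) x) (Mul x (Scal c))"
| vec_add: "u \<in> l2 \<Longrightarrow> v \<in> l2 \<Longrightarrow> cl_rel (Vec (\<lambda>i. u i + v i)) (Add (Vec u) (Vec v))"
| vec_smult: "v \<in> l2 \<Longrightarrow> cl_rel (Vec (smult_seq c v)) (Mul (Scal c) (Vec v))"
| vec_sq: "v \<in> l2 \<Longrightarrow> cl_rel (Mul (Vec v) (Vec v)) (Scal (qf v))"

text \<open>The element of Cl(V,f) represented by an expression (its equivalence class).\<close>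
definition cl_class :: "cexp \<Rightarrow> cexp set" where
  "cl_class a = {b. cl_wf b \<and> cl_rel a b}"

definition cl_prod :: "(nat \<Rightarrow> complex) list \<Rightarrow> cexp" where
  "cl_prod ws = foldr (\<lambda>w acc. Mul (Vec w) acc) ws (Scal 1)"

text \<open>Representatives of Cl(U,f)_0: linear span of products of an even number of
  elements of U (the empty product being 1).\<close>
inductive_set cl_even :: "(nat \<Rightarrow> complex) set \<Rightarrow> cexp set" for U where
  scal: "Scal c \<in> cl_even U"
| prod: "set ws \<subseteq> U \<Longrightarrow> even (length ws) \<Longrightarrow> cl_prod ws \<in> cl_even U"
| add: "x \<in> cl_even U \<Longrightarrow> y \<in> cl_even U \<Longrightarrow> Add x y \<in> cl_even U"
| smul: "x \<in> cl_even U \<Longrightarrow> Mul (Scal c) x \<in> cl_even U"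

definition centralizer :: "(nat \<Rightarrow> complex) \<Rightarrow> cexp set" where
  "centralizer v = {a. cl_wf a \<and> cl_rel (Mul (Vec v) a) (Mul a (Vec v))}"

definition even_coset :: "cexp \<Rightarrow> (nat \<Rightarrow> complex) set \<Rightarrow> cexp set" where
  "even_coset x U = {Add (Mul x b) c | b c. b \<in> cl_even U \<and> c \<in> cl_even U}"

end

theory Submission
  imports Defs
begin


lemma cl_rel_equivp: "equivp cl_rel"
  by (rule equivpI) (auto simp: reflp_def symp_def transp_def intro: cl_rel.intros)

quotient_type cl = cexp / cl_rel
  by (rule cl_rel_equivp)

instantiation cl :: "{ring, monoid_mult}"
begin
lift_definition zero_cl :: cl is "Scal 0" .
lift_definition one_cl :: cl is "Scal 1" .
lift_definition plus_cl :: "cl \<Rightarrow> cl \<Rightarrow> cl" is Add by (rule cl_rel.add_cong)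
lift_definition times_cl :: "cl \<Rightarrow> cl \<Rightarrow> cl" is Mul by (rule cl_rel.mul_cong)
lift_definition uminus_cl :: "cl \<Rightarrow> cl" is "\<lambda>x. Mul (Scal (-1)) x" by (auto intro: cl_rel.intros)
lift_definition minus_cl :: "cl \<Rightarrow> cl \<Rightarrow> cl" is "\<lambda>x y. Add x (Mul (Scal (-1)) y)" by (auto intro: cl_rel.intros)
instance
proof
  fix a b c :: cl
  show "a + b + c = a + (b + c)" by transfer (rule cl_rel.add_assoc)
  show "a + b = b + a" by transfer (rule cl_rel.add_comm)
  show "0 + a = a" by transfer (meson cl_rel.add_comm cl_rel.add_zero cl_rel.trans)
  show "- a + a = 0" by transfer (meson cl_rel.add_comm cl_rel.add_neg cl_rel.trans)
  show "a - b = a + - b" by transfer (rule cl_rel.refl)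
  show "a * b * c = a * (b * c)" by transfer (rule cl_rel.mul_assoc)
  show "(a + b) * c = a * c + b * c" by transfer (rule cl_rel.distrib_r)
  show "a * (b + c) = a * b + a * c" by transfer (rule cl_rel.distrib_l)
  show "1 * a = a" by transfer (rule cl_rel.mul_one_l)
  show "a * 1 = a" by transfer (rule cl_rel.mul_one_r)
qed
end

lift_definition sc :: "complex \<Rightarrow> cl" is Scal .
lift_definition vec :: "(nat \<Rightarrow> complex) \<Rightarrow> cl" is Vec .


lemma abs_Add[simp]: "abs_cl (Add x y) = abs_cl x + abs_cl y" by (simp add: plus_cl.abs_eq)
lemma abs_Mul[simp]: "abs_cl (Mul x y) = abs_cl x * abs_cl y" by (simp add: times_cl.abs_eq)
lemma abs_Scal[simp]: "abs_cl (Scal c) = sc c" by (simp add: sc.abs_eq)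
lemma abs_Vec[simp]: "abs_cl (Vec w) = vec w" by (simp add: vec.abs_eq)

lemma sc_add: "sc (a + b) = sc a + sc b"
  by transfer (rule cl_rel.scal_add)
lemma sc_mult: "sc (a * b) = sc a * sc b"
  by transfer (rule cl_rel.scal_mul)
lemma sc_0[simp]: "sc 0 = 0" by transfer (rule cl_rel.refl)
lemma sc_1[simp]: "sc 1 = 1" by transfer (rule cl_rel.refl)
lemma sc_central: "sc c * x = x * sc c" by transfer (rule cl_rel.scal_central)
lemma uminus_sc: "- x = sc (-1) * x" by transfer (rule cl_rel.refl)
lemma sc_neg: "sc (- c) = - sc c"
  by (metis mult.commute mult_1_right mult_minus1 sc_mult uminus_sc)
lemma sc_diff: "sc (a - b) = sc a - sc b"
  by (metis diff_conv_add_uminus sc_add sc_neg)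

lemma vec_add: "u \<in> l2 \<Longrightarrow> w \<in> l2 \<Longrightarrow> vec (\<lambda>i. u i + w i) = vec u + vec w"
  by transfer (rule cl_rel.vec_add)
lemma vec_smult: "v \<in> l2 \<Longrightarrow> vec (smult_seq c v) = sc c * vec v"
  by transfer (rule cl_rel.vec_smult)
lemma vec_sq: "v \<in> l2 \<Longrightarrow> vec v * vec v = sc (qf v)"
  by transfer (rule cl_rel.vec_sq)

lemma half: "(x::cl) + x = 0 \<Longrightarrow> x = 0"
proof -
  assume "x + x = 0"
  then have "sc (1/2) * (x + x) = 0" by simp
  then have "(sc (1/2) + sc (1/2)) * x = 0" by (simp add: algebra_simps)
  then show "x = 0" by (simp flip: sc_add)
qed

lemma l2_add: assumes "u \<in> l2" "w \<in> l2" shows "(\<lambda>i. u i + w i) \<in> l2"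
proof -
  have s: "summable (\<lambda>i. 2 * (cmod (u i))\<^sup>2 + 2 * (cmod (w i))\<^sup>2)"
    using assms unfolding l2_def by (intro summable_add summable_mult) auto
  have b: "norm ((cmod (u i + w i))\<^sup>2) \<le> 2 * (cmod (u i))\<^sup>2 + 2 * (cmod (w i))\<^sup>2" for i
  proof -
    have "cmod (u i + w i) \<le> cmod (u i) + cmod (w i)" by (rule norm_triangle_ineq)
    then have "(cmod (u i + w i))\<^sup>2 \<le> (cmod (u i) + cmod (w i))\<^sup>2"
      by (simp add: power_mono)
    also have "\<dots> \<le> 2 * (cmod (u i))\<^sup>2 + 2 * (cmod (w i))\<^sup>2"
    proof -
      have "0 \<le> (cmod (u i) - cmod (w i))\<^sup>2" by simp
      then show ?thesis unfolding power2_diff power2_sum by linarith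
    qed
    finally show ?thesis by simp
  qed
  have "summable (\<lambda>i. (cmod (u i + w i))\<^sup>2)"
    by (rule summable_comparison_test'[OF s b])
  then show ?thesis unfolding l2_def by simp
qed

lemma l2_smult: assumes "u \<in> l2" shows "(\<lambda>i. c * u i) \<in> l2"
proof -
  have "summable (\<lambda>i. (cmod c)\<^sup>2 * (cmod (u i))\<^sup>2)"
    using assms unfolding l2_def by (intro summable_mult) auto
  then show ?thesis unfolding l2_def by (simp add: norm_mult power_mult_distrib)
qed

lemma l2_prod_summable: assumes "u \<in> l2" "w \<in> l2" shows "summable (\<lambda>i. u i * w i)"
proof -
  have s: "summable (\<lambda>i. (cmod (u i))\<^sup>2 + (cmod (w i))\<^sup>2)"
    using assms unfolding l2_def by (intro summable_add) auto
  have b: "norm (norm (u i * w i)) \<le> (cmod (u i))\<^sup>2 + (cmod (w i))\<^sup>2" for i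
  proof -
    have "2 * cmod (u i) * cmod (w i) \<le> (cmod (u i))\<^sup>2 + (cmod (w i))\<^sup>2"
      by (rule sum_squares_bound)
    moreover have "0 \<le> cmod (u i) * cmod (w i)" by simp
    moreover have "norm (norm (u i * w i)) = cmod (u i) * cmod (w i)" by (simp add: norm_mult)
    ultimately show ?thesis by linarith
  qed
  have "summable (\<lambda>i. norm (u i * w i))"
    by (rule summable_comparison_test'[OF s b])
  then show ?thesis by (rule summable_norm_cancel)
qed

lemma bf_formula: assumes "u \<in> l2" "w \<in> l2" shows "bf u w = 2 * (\<Sum>i. u i * w i)"
proof -
  have su: "summable (\<lambda>i. (u i)\<^sup>2)" and sw: "summable (\<lambda>i. (w i)\<^sup>2)"
    and suw: "summable (\<lambda>i. u i * w i)"
    using l2_prod_summable[OF assms(1) assms(1)] l2_prod_summable[OF assms(2) assms(2)]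
      l2_prod_summable[OF assms] by (auto simp: power2_eq_square)
  have s2: "summable (\<lambda>i. 2 * (u i * w i))" using suw by (rule summable_mult)
  have "qf (\<lambda>i. u i + w i) = (\<Sum>i. ((u i)\<^sup>2 + 2 * (u i * w i)) + (w i)\<^sup>2)"
    unfolding qf_def by (simp add: power2_sum algebra_simps)
  also have "\<dots> = (\<Sum>i. (u i)\<^sup>2 + 2 * (u i * w i)) + (\<Sum>i. (w i)\<^sup>2)"
    by (rule suminf_add[symmetric]) (intro summable_add su s2, rule sw)
  also have "(\<Sum>i. (u i)\<^sup>2 + 2 * (u i * w i)) = (\<Sum>i. (u i)\<^sup>2) + (\<Sum>i. 2 * (u i * w i))"
    by (rule suminf_add[symmetric]) (rule su, rule s2)
  also have "(\<Sum>i. 2 * (u i * w i)) = 2 * (\<Sum>i. u i * w i)"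
    by (rule suminf_mult[OF suw])
  finally show ?thesis unfolding bf_def qf_def by simp
qed

lemma bf_lin: assumes "u \<in> l2" "w \<in> l2" "v \<in> l2"
  shows "bf u (\<lambda>i. w i + c * v i) = bf u w + c * bf u v"
proof -
  have s1: "summable (\<lambda>i. u i * w i)" by (rule l2_prod_summable[OF assms(1,2)])
  have s2: "summable (\<lambda>i. c * (u i * v i))" by (rule summable_mult, rule l2_prod_summable[OF assms(1,3)])
  have "(\<Sum>i. u i * (w i + c * v i)) = (\<Sum>i. u i * w i + c * (u i * v i))"
    by (simp add: algebra_simps)
  also have "\<dots> = (\<Sum>i. u i * w i) + (\<Sum>i. c * (u i * v i))"
    by (rule suminf_add[symmetric, OF s1 s2])
  also have "(\<Sum>i. c * (u i * v i)) = c * (\<Sum>i. u i * v i)"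
    by (rule suminf_mult, rule l2_prod_summable[OF assms(1,3)])
  finally have "(\<Sum>i. u i * (w i + c * v i)) = (\<Sum>i. u i * w i) + c * (\<Sum>i. u i * v i)" .
  then show ?thesis
    using assms l2_add[OF assms(2) l2_smult[OF assms(3)]]
    by (simp add: bf_formula algebra_simps)
qed

lemma bf_self: assumes "v \<in> l2" shows "bf v v = 2 * qf v"
  using assms by (simp add: bf_formula qf_def power2_eq_square)

lemma unitseq_l2: "unitseq i \<in> l2"
proof -
  have "summable (\<lambda>k. (cmod (unitseq i k))\<^sup>2)"
    by (rule summable_finite[of "{i}"]) (auto simp: unitseq_def)
  then show ?thesis unfolding l2_def by simp
qed

lemma qf_unitseq: "qf (unitseq i) = 1"
proof -
  have "(\<lambda>k. if k = i then (1::complex) else 0) sums 1"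
    using sums_single[of i "\<lambda>_. (1::complex)"] by simp
  moreover have "(\<lambda>k. (unitseq i k)\<^sup>2) = (\<lambda>k. if k = i then (1::complex) else 0)"
    by (auto simp: unitseq_def)
  ultimately show ?thesis unfolding qf_def by (simp add: sums_iff)
qed

lemma bf_unitseq: assumes "i \<noteq> j" shows "bf (unitseq i) (unitseq j) = 0"
proof -
  have "(\<lambda>k. unitseq i k * unitseq j k) = (\<lambda>k. 0)" using assms by (auto simp: unitseq_def)
  then show ?thesis by (simp add: bf_formula unitseq_l2)
qed



lemma anticomm: assumes "u \<in> l2" "w \<in> l2"
  shows "vec u * vec w + vec w * vec u = sc (bf u w)"
proof -
  have "vec (\<lambda>i. u i + w i) * vec (\<lambda>i. u i + w i) = sc (qf (\<lambda>i. u i + w i))"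
    by (rule vec_sq[OF l2_add[OF assms]])
  then have "(vec u + vec w) * (vec u + vec w) = sc (qf (\<lambda>i. u i + w i))"
    by (simp add: vec_add assms)
  then have "sc (qf u) + vec u * vec w + vec w * vec u + sc (qf w) = sc (qf (\<lambda>i. u i + w i))"
    by (simp add: algebra_simps vec_sq assms)
  then show ?thesis unfolding bf_def sc_diff
    by (simp add: algebra_simps)
qed

lemma perp_anti: assumes "v \<in> l2" "w \<in> perp v"
  shows "vec w * vec v = - (vec v * vec w)"
proof -
  have "w \<in> l2" "bf v w = 0" using assms(2) by (auto simp: perp_def)
  then have "vec v * vec w + vec w * vec v = 0" using anticomm[OF assms(1)] by simp
  then show ?thesis by (simp add: eq_neg_iff_add_eq_0 add.commute)
qed

inductive Pc :: "(nat \<Rightarrow> complex) set \<Rightarrow> bool \<Rightarrow> cl \<Rightarrow> bool" for U where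
  one: "Pc U True 1"
| vmul: "w \<in> U \<Longrightarrow> Pc U p x \<Longrightarrow> Pc U (\<not> p) (vec w * x)"
| zero: "Pc U p 0"
| add: "Pc U p x \<Longrightarrow> Pc U p y \<Longrightarrow> Pc U p (x + y)"
| smul: "Pc U p x \<Longrightarrow> Pc U p (sc c * x)"

lemma Pc_neg: "Pc U p x \<Longrightarrow> Pc U p (- x)"
  by (simp add: uminus_sc Pc.smul)

lemma Pc_vmul': "w \<in> U \<Longrightarrow> Pc U p x \<Longrightarrow> q = (\<not> p) \<Longrightarrow> Pc U q (vec w * x)"
  using Pc.vmul by blast

lemma Pc_mono: "Pc U p x \<Longrightarrow> U \<subseteq> U' \<Longrightarrow> Pc U' p x"
  by (induction rule: Pc.induct) (auto intro: Pc.intros)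

lemma Pc_mult: "Pc U p x \<Longrightarrow> Pc U q y \<Longrightarrow> r = (p = q) \<Longrightarrow> Pc U r (x * y)"
proof (induction arbitrary: r rule: Pc.induct)
  case one then show ?case by simp
next
  case (vmul w p x)
  have "Pc U (p = q) (x * y)" using vmul by simp
  then have "Pc U r (vec w * (x * y))" using vmul by (auto intro: Pc_vmul')
  then show ?case by (simp add: mult.assoc)
next
  case zero then show ?case by (simp add: Pc.zero)
next
  case (add p x y') then show ?case by (simp add: distrib_right Pc.add)
next
  case (smul p x c) then show ?case by (simp add: mult.assoc Pc.smul)
qed

lemma Pc_comm: assumes "v \<in> l2" "U \<subseteq> perp v"
  shows "Pc U p x \<Longrightarrow> x * vec v = (if p then vec v * x else - (vec v * x))"
proof (induction rule: Pc.induct)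
  case one then show ?case by simp
next
  case (vmul w p x)
  have a: "vec w * vec v = - (vec v * vec w)" using perp_anti[OF assms(1)] vmul assms(2) by auto
  have "vec w * x * vec v = vec w * (x * vec v)" by (simp add: mult.assoc)
  also have "\<dots> = (if \<not> p then vec v * (vec w * x) else - (vec v * (vec w * x)))"
    using vmul(3) a by (auto simp flip: mult.assoc)
  finally show ?case .
next
  case zero then show ?case by simp
next
  case (add p x y) then show ?case by (simp add: algebra_simps)
next
  case (smul p x c)
  then show ?case by (simp add: mult.assoc) (metis mult.assoc sc_central mult_minus_right)
qed



lemma sc_m1[simp]: "sc (-1) * x = - x" by (simp add: uminus_sc)

fun alpha_exp :: "cexp \<Rightarrow> cexp" where
  "alpha_exp (Vec w) = Mul (Scal (-1)) (Vec w)"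
| "alpha_exp (Scal c) = Scal c"
| "alpha_exp (Add x y) = Add (alpha_exp x) (alpha_exp y)"
| "alpha_exp (Mul x y) = Mul (alpha_exp x) (alpha_exp y)"

lemma alpha_exp_resp: "cl_rel x y \<Longrightarrow> cl_rel (alpha_exp x) (alpha_exp y)"
proof -
  assume "cl_rel x y"
  then have "abs_cl (alpha_exp x) = abs_cl (alpha_exp y)"
  proof (induction rule: cl_rel.induct)
    case (scal_add a b) then show ?case by (simp add: sc_add)
  next
    case (scal_mul a b) then show ?case by (simp add: sc_mult)
  next
    case (scal_central c x) then show ?case by (simp add: sc_central)
  next
    case (vec_add u v)
    then have "vec (\<lambda>i. u i + v i) = vec u + vec v" by (rule Submission.vec_add)
    then show ?case by simp
  next
    case (vec_smult v c) then show ?case by (simp add: Submission.vec_smult)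
  next
    case (vec_sq v) then show ?case by (simp add: Submission.vec_sq)
  qed (simp_all add: algebra_simps)
  then show ?thesis by (simp add: cl.abs_eq_iff)
qed

lift_definition alpha :: "cl \<Rightarrow> cl" is alpha_exp by (rule alpha_exp_resp)

lemma alpha_add[simp]: "alpha (x + y) = alpha x + alpha y"
  by transfer (simp add: cl_rel.refl)
lemma alpha_mult[simp]: "alpha (x * y) = alpha x * alpha y"
  by transfer (simp add: cl_rel.refl)
lemma alpha_sc[simp]: "alpha (sc c) = sc c"
  by transfer (simp add: cl_rel.refl)
lemma alpha_vec[simp]: "alpha (vec w) = - vec w"
proof -
  have "alpha (vec w) = sc (-1) * vec w" by transfer (simp add: cl_rel.refl)
  then show ?thesis by simp
qed
lemma alpha_0[simp]: "alpha 0 = 0" using alpha_sc[of 0] by simp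
lemma alpha_1[simp]: "alpha 1 = 1" using alpha_sc[of 1] by simp
lemma alpha_neg[simp]: "alpha (- x) = - alpha x"
  by (metis alpha_mult alpha_sc sc_m1)

lemma Pc_alpha: "Pc U p x \<Longrightarrow> alpha x = (if p then x else - x)"
  by (induction rule: Pc.induct) auto

definition psi :: "(nat \<Rightarrow> complex) \<Rightarrow> cl \<Rightarrow> cl" where
  "psi v a = vec v * alpha a * vec v"

lemma vv: "v \<in> l2 \<Longrightarrow> qf v = 1 \<Longrightarrow> vec v * vec v = 1"
  by (simp add: Submission.vec_sq)

lemma psi_add: "psi v (x + y) = psi v x + psi v y"
  by (simp add: psi_def algebra_simps)
lemma psi_mult: assumes "v \<in> l2" "qf v = 1" shows "psi v (x * y) = psi v x * psi v y"
proof -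
  have "psi v x * psi v y = vec v * alpha x * (vec v * vec v) * alpha y * vec v"
    by (simp add: psi_def mult.assoc)
  then show ?thesis using vv[OF assms] by (simp add: psi_def mult.assoc)
qed
lemma psi_0: "psi v 0 = 0" by (simp add: psi_def)
lemma psi_neg: "psi v (- x) = - psi v x" by (simp add: psi_def)
lemma psi_v: assumes "v \<in> l2" "qf v = 1" shows "psi v (vec v) = - vec v"
  using vv[OF assms] by (simp add: psi_def)

lemma Pc_psi: assumes "v \<in> l2" "qf v = 1" "U \<subseteq> perp v" "Pc U p x"
  shows "psi v x = x"
proof -
  have c: "x * vec v = (if p then vec v * x else - (vec v * x))"
    using Pc_comm[OF assms(1,3) assms(4)] .
  have vvx: "vec v * (vec v * x) = x" using vv[OF assms(1,2)] by (simp flip: mult.assoc)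
  show ?thesis
    using c vvx Pc_alpha[OF assms(4)] by (cases p) (simp_all add: psi_def mult.assoc)
qed

lemma Sep: assumes "v \<in> l2" "qf v = 1" "psi v x = x" "psi v y = y" "psi v P = - P"
  "R * P = 1" "x + P * y = 0"
  shows "x = 0 \<and> y = 0"
proof -
  have "psi v (x + P * y) = 0" using assms(7) psi_0 by simp
  moreover have "psi v (x + P * y) = x + (- P) * y" using assms(1-5) by (simp add: psi_add psi_mult)
  ultimately have "x + (- P) * y = 0" by simp
  then have "(x + P * y) + (x + (- P) * y) = 0" using assms(7) by simp
  then have "x + x = 0" by (simp add: algebra_simps)
  then have x0: "x = 0" by (rule half)
  then have "P * y = 0" using assms(7) by simp
  then have "R * P * y = 0" by (simp add: mult.assoc)
  then have "y = 0" using assms(6) by simp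
  with x0 show ?thesis by simp
qed



lemma Pc_diff: "Pc U p x \<Longrightarrow> Pc U p y \<Longrightarrow> Pc U p (x - y)"
  unfolding diff_conv_add_uminus by (intro Pc.add Pc_neg)

lemma Dec:
  assumes vU: "v \<in> U" and Ul2: "U \<subseteq> l2" and qv: "qf v = 1"
    and cl: "\<And>w c. w \<in> U \<Longrightarrow> (\<lambda>i. w i + c * v i) \<in> U"
  shows "Pc U p x \<Longrightarrow> \<exists>x0 x1. Pc (U \<inter> perp v) p x0 \<and> Pc (U \<inter> perp v) (\<not> p) x1 \<and> x = x0 + vec v * x1"
proof (induction rule: Pc.induct)
  case one
  show ?case by (rule exI[of _ 1], rule exI[of _ 0]) (simp add: Pc.one Pc.zero)
next
  case (vmul w p x)
  then obtain x0 x1 where h: "Pc (U \<inter> perp v) p x0" "Pc (U \<inter> perp v) (\<not> p) x1" "x = x0 + vec v * x1"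
    by blast
  have vl: "v \<in> l2" and wl: "w \<in> l2" using vU Ul2 vmul(1) by auto
  define c where "c = bf v w / 2"
  define w' where "w' = (\<lambda>i. w i + (- c) * v i)"
  have w'U: "w' \<in> U" unfolding w'_def using cl vmul(1) by blast
  have w'l: "w' \<in> l2" using w'U Ul2 by auto
  have "bf v w' = bf v w + (- c) * bf v v" unfolding w'_def by (rule bf_lin[OF vl wl vl])
  also have "\<dots> = 0" by (simp add: bf_self[OF vl] qv c_def)
  finally have w'p: "w' \<in> perp v" using w'l by (simp add: perp_def)
  have sl: "smult_seq c v \<in> l2" unfolding smult_seq_def by (rule l2_smult[OF vl])
  have "w = (\<lambda>i. w' i + smult_seq c v i)" by (auto simp: w'_def smult_seq_def)
  then have vw: "vec w = vec w' + sc c * vec v"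
    using Submission.vec_add[OF w'l sl] Submission.vec_smult[OF vl] by simp
  have an: "vec w' * vec v = - (vec v * vec w')" by (rule perp_anti[OF vl w'p])
  have v2: "vec v * vec v = 1" by (rule vv[OF vl qv])
  have t1: "(vec w' * vec v) * x1 = - (vec v * (vec w' * x1))" by (simp add: an mult.assoc)
  have t2: "(sc c * vec v) * x0 = vec v * (sc c * x0)" by (metis sc_central mult.assoc)
  have t3: "sc c * (vec v * vec v) * x1 = sc c * x1" by (simp add: v2)
  have e1: "vec w * x = vec w' * x0 + (vec w' * vec v) * x1 + (sc c * vec v) * x0 + sc c * (vec v * vec v) * x1"
    unfolding vw h(3) by (simp add: distrib_left distrib_right mult.assoc add_ac)
  have eq: "vec w * x = (vec w' * x0 + sc c * x1) + vec v * (sc c * x0 - vec w' * x1)"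
    unfolding e1 t1 t2 t3 by (simp add: algebra_simps)
  have w'U': "w' \<in> U \<inter> perp v" using w'U w'p by simp
  have P1: "Pc (U \<inter> perp v) (\<not> p) (vec w' * x0 + sc c * x1)"
    by (intro Pc.add Pc.vmul Pc.smul w'U' h(1,2))
  have P2: "Pc (U \<inter> perp v) p (vec w' * x1)"
    by (rule Pc_vmul'[OF w'U' h(2)]) simp
  have P3: "Pc (U \<inter> perp v) p (sc c * x0 - vec w' * x1)"
    by (intro Pc_diff Pc.smul h(1) P2)
  show ?case using eq P1 P3 by auto
next
  case (zero p)
  show ?case by (rule exI[of _ 0], rule exI[of _ 0]) (simp add: Pc.zero)
next
  case (add p x y)
  then obtain x0 x1 y0 y1 where "Pc (U \<inter> perp v) p x0" "Pc (U \<inter> perp v) (\<not> p) x1" "x = x0 + vec v * x1"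
     "Pc (U \<inter> perp v) p y0" "Pc (U \<inter> perp v) (\<not> p) y1" "y = y0 + vec v * y1" by blast
  then show ?case
    by (intro exI[of _ "x0 + y0"] exI[of _ "x1 + y1"]) (auto simp: algebra_simps intro: Pc.add)
next
  case (smul p x c)
  then obtain x0 x1 where "Pc (U \<inter> perp v) p x0" "Pc (U \<inter> perp v) (\<not> p) x1" "x = x0 + vec v * x1"
    by blast
  moreover have "sc c * (vec v * x1) = vec v * (sc c * x1)"
    by (metis mult.assoc sc_central)
  ultimately show ?case
    by (intro exI[of _ "sc c * x0"] exI[of _ "sc c * x1"]) (auto simp: algebra_simps intro: Pc.smul)
qed

lemma wf_dec: "cl_wf a \<Longrightarrow> \<exists>x y. Pc l2 True x \<and> Pc l2 False y \<and> abs_cl a = x + y"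
proof (induction a)
  case (Vec w)
  have "Pc l2 False (vec w * 1)" by (rule Pc_vmul'[OF _ Pc.one]) (use Vec in auto)
  then have "Pc l2 False (vec w)" by simp
  then show ?case by (intro exI[of _ 0] exI[of _ "vec w"]) (auto intro: Pc.zero)
next
  case (Scal c)
  have "Pc l2 True (sc c * 1)" by (intro Pc.smul Pc.one)
  then have "Pc l2 True (sc c)" by simp
  then show ?case by (intro exI[of _ "sc c"] exI[of _ 0]) (auto intro: Pc.zero)
next
  case (Add a b)
  then obtain x y x' y' where "Pc l2 True x" "Pc l2 False y" "abs_cl a = x + y"
    "Pc l2 True x'" "Pc l2 False y'" "abs_cl b = x' + y'" by auto
  then show ?case
    by (intro exI[of _ "x + x'"] exI[of _ "y + y'"]) (auto simp: algebra_simps intro: Pc.add)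
next
  case (Mul a b)
  then obtain x y x' y' where h: "Pc l2 True x" "Pc l2 False y" "abs_cl a = x + y"
    "Pc l2 True x'" "Pc l2 False y'" "abs_cl b = x' + y'" by auto
  have "Pc l2 True (x * x' + y * y')" using h by (auto intro!: Pc.add Pc_mult)
  moreover have "Pc l2 False (x * y' + y * x')" using h by (auto intro!: Pc.add Pc_mult)
  moreover have "abs_cl (Mul a b) = (x * x' + y * y') + (x * y' + y * x')"
    using h by (simp add: algebra_simps)
  ultimately show ?case by blast
qed

lemma abs_prod_Nil[simp]: "abs_cl (cl_prod []) = 1" by (simp add: cl_prod_def)
lemma abs_prod_Cons[simp]: "abs_cl (cl_prod (w # ws)) = vec w * abs_cl (cl_prod ws)"
  by (simp add: cl_prod_def)
lemma abs_prod_append: "abs_cl (cl_prod (xs @ ys)) = abs_cl (cl_prod xs) * abs_cl (cl_prod ys)"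
  by (induction xs) (simp_all add: mult.assoc)

lemma Pc_prod: "set ws \<subseteq> U \<Longrightarrow> Pc U (even (length ws)) (abs_cl (cl_prod ws))"
  by (induction ws) (auto intro: Pc.one Pc_vmul')

lemma cl_prod_wf: "set ws \<subseteq> l2 \<Longrightarrow> cl_wf (cl_prod ws)"
  by (induction ws) (auto simp: cl_prod_def)

lemma cl_even_wf: "e \<in> cl_even U \<Longrightarrow> U \<subseteq> l2 \<Longrightarrow> cl_wf e"
  by (induction rule: cl_even.induct) (auto intro: cl_prod_wf)

lemma cl_even_Pc: "e \<in> cl_even U \<Longrightarrow> Pc U True (abs_cl e)"
proof (induction rule: cl_even.induct)
  case (scal c)
  have "Pc U True (sc c * 1)" by (intro Pc.smul Pc.one)
  then show ?case by simp
next
  case (prod ws) then show ?case using Pc_prod[of ws U] by simp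
qed (auto intro: Pc.add Pc.smul)

inductive_set cl_oddE :: "(nat \<Rightarrow> complex) set \<Rightarrow> cexp set" for U where
  prod: "set ws \<subseteq> U \<Longrightarrow> odd (length ws) \<Longrightarrow> cl_prod ws \<in> cl_oddE U"
| zero: "Scal 0 \<in> cl_oddE U"
| add: "x \<in> cl_oddE U \<Longrightarrow> y \<in> cl_oddE U \<Longrightarrow> Add x y \<in> cl_oddE U"
| smul: "x \<in> cl_oddE U \<Longrightarrow> Mul (Scal c) x \<in> cl_oddE U"

lemma even_to_odd: "e \<in> cl_even U \<Longrightarrow> w \<in> U \<Longrightarrow> \<exists>e' \<in> cl_oddE U. abs_cl e' = vec w * abs_cl e"
proof (induction rule: cl_even.induct)
  case (scal c)
  have "Mul (Scal c) (cl_prod [w]) \<in> cl_oddE U" using scal by (auto intro!: cl_oddE.intros)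
  moreover have "abs_cl (Mul (Scal c) (cl_prod [w])) = vec w * abs_cl (Scal c)"
    by (simp add: sc_central)
  ultimately show ?case by blast
next
  case (prod ws)
  then have "cl_prod (w # ws) \<in> cl_oddE U" by (auto intro!: cl_oddE.intros)
  then show ?case by force
next
  case (add x y)
  then obtain a b where "a \<in> cl_oddE U" "b \<in> cl_oddE U" "abs_cl a = vec w * abs_cl x" "abs_cl b = vec w * abs_cl y"
    by blast
  then show ?case by (intro bexI[of _ "Add a b"]) (auto simp: algebra_simps intro: cl_oddE.intros)
next
  case (smul x c)
  then obtain a where "a \<in> cl_oddE U" "abs_cl a = vec w * abs_cl x" by blast
  then show ?case by (intro bexI[of _ "Mul (Scal c) a"])
      (auto intro: cl_oddE.intros, metis mult.assoc sc_central)
qed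

lemma odd_to_even: "e \<in> cl_oddE U \<Longrightarrow> w \<in> U \<Longrightarrow> \<exists>e' \<in> cl_even U. abs_cl e' = vec w * abs_cl e"
proof (induction rule: cl_oddE.induct)
  case zero
  have "Scal 0 \<in> cl_even U" by (rule cl_even.scal)
  then show ?case by force
next
  case (prod ws)
  then have "cl_prod (w # ws) \<in> cl_even U" by (auto intro!: cl_even.intros)
  then show ?case by force
next
  case (add x y)
  then obtain a b where "a \<in> cl_even U" "b \<in> cl_even U" "abs_cl a = vec w * abs_cl x" "abs_cl b = vec w * abs_cl y"
    by blast
  then show ?case by (intro bexI[of _ "Add a b"]) (auto simp: algebra_simps intro: cl_even.intros)
next
  case (smul x c)
  then obtain a where "a \<in> cl_even U" "abs_cl a = vec w * abs_cl x" by blast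
  then show ?case by (intro bexI[of _ "Mul (Scal c) a"])
      (auto intro: cl_even.intros, metis mult.assoc sc_central)
qed

lemma Pc_cl_even: "Pc U p x \<Longrightarrow> \<exists>e. abs_cl e = x \<and> (if p then e \<in> cl_even U else e \<in> cl_oddE U)"
proof (induction rule: Pc.induct)
  case one
  have "Scal 1 \<in> cl_even U" by (rule cl_even.scal)
  then show ?case by (intro exI[of _ "Scal 1"]) simp
next
  case (vmul w p x)
  then obtain e where e: "abs_cl e = x" "if p then e \<in> cl_even U else e \<in> cl_oddE U" by blast
  show ?case
  proof (cases p)
    case True
    then obtain e' where "e' \<in> cl_oddE U" "abs_cl e' = vec w * abs_cl e"
      using even_to_odd[of e U w] e vmul(1) by auto
    then show ?thesis using True e by auto
  next
    case False
    then obtain e' where "e' \<in> cl_even U" "abs_cl e' = vec w * abs_cl e"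
      using odd_to_even[of e U w] e vmul(1) by auto
    then show ?thesis using False e by auto
  qed
next
  case (zero p)
  show ?case by (intro exI[of _ "Scal 0"]) (auto intro: cl_even.intros cl_oddE.intros)
next
  case (add p x y)
  then obtain a b where "abs_cl a = x" "if p then a \<in> cl_even U else a \<in> cl_oddE U"
    "abs_cl b = y" "if p then b \<in> cl_even U else b \<in> cl_oddE U" by blast
  then show ?case by (intro exI[of _ "Add a b"]) (auto intro: cl_even.intros cl_oddE.intros)
next
  case (smul p x c)
  then obtain a where "abs_cl a = x" "if p then a \<in> cl_even U else a \<in> cl_oddE U" by blast
  then show ?case by (intro exI[of _ "Mul (Scal c) a"]) (auto intro: cl_even.intros cl_oddE.intros)
qed

lemma Pc_even_rep: "Pc U True x \<Longrightarrow> \<exists>e \<in> cl_even U. abs_cl e = x"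
  using Pc_cl_even[of U True x] by auto

lemma class_eq: assumes "cl_wf a" "cl_wf b"
  shows "cl_class a = cl_class b \<longleftrightarrow> abs_cl a = abs_cl b"
proof
  assume "cl_class a = cl_class b"
  moreover have "a \<in> cl_class a" using assms by (simp add: cl_class_def cl_rel.refl)
  ultimately have "cl_rel b a" by (simp add: cl_class_def)
  then show "abs_cl a = abs_cl b" by (simp add: cl.abs_eq_iff cl_rel.sym)
next
  assume "abs_cl a = abs_cl b"
  then have "cl_rel a b" by (simp add: cl.abs_eq_iff)
  then show "cl_class a = cl_class b" unfolding cl_class_def
    by (auto intro: cl_rel.trans cl_rel.sym)
qed



lemma alg_step:
  fixes v P x0 x1 y0 y1 :: cl
  assumes vv: "v * v = 1" and c0: "x0 * v = v * x0" and c1: "x1 * v = - (v * x1)"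
    and cP: "v * P = (if b then P * v else - (P * v))"
    and d0: "y0 * v = (if b then - (v * y0) else v * y0)"
    and d1: "y1 * v = (if b then v * y1 else - (v * y1))"
    and H: "v * (x0 + v * x1 + P * (y0 + v * y1)) = (x0 + v * x1 + P * (y0 + v * y1)) * v"
  shows "x1 + P * (v * (if b then y0 else - y0)) = 0"
proof -
  have vvz: "v * (v * z) = z" for z using vv by (simp flip: mult.assoc)
  have vPz: "v * (P * z) = (if b then P * (v * z) else - (P * (v * z)))" for z
    using cP by (cases b) (simp_all flip: mult.assoc)
  show ?thesis
  proof (cases b)
    case True
    have vA: "v * (x0 + v * x1 + P * (y0 + v * y1)) = v * x0 + x1 + P * (v * y0) + P * y1"
      using True by (simp add: distrib_left right_diff_distrib vvz vPz)
    have Av: "(x0 + v * x1 + P * (y0 + v * y1)) * v = v * x0 - x1 - P * (v * y0) + P * y1"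
      using True by (simp add: distrib_right distrib_left right_diff_distrib mult.assoc c0 c1 d0 d1 vvz)
    have "(x1 + P * (v * y0)) + (x1 + P * (v * y0)) = 0"
      using H unfolding vA Av by (simp add: algebra_simps)
    then have "x1 + P * (v * y0) = 0" by (rule half)
    then show ?thesis using True by simp
  next
    case False
    have vA: "v * (x0 + v * x1 + P * (y0 + v * y1)) = v * x0 + x1 - P * (v * y0) - P * y1"
      using False by (simp add: distrib_left right_diff_distrib vvz vPz)
    have Av: "(x0 + v * x1 + P * (y0 + v * y1)) * v = v * x0 - x1 + P * (v * y0) - P * y1"
      using False by (simp add: distrib_right distrib_left right_diff_distrib mult.assoc c0 c1 d0 d1 vvz)
    have "(x1 + P * (v * - y0)) + (x1 + P * (v * - y0)) = 0"
      using H unfolding vA Av by (simp add: algebra_simps)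
    then have "x1 + P * (v * - y0) = 0" by (rule half)
    then show ?thesis using False by simp
  qed
qed

lemma perp_l2: "perp v \<subseteq> l2" by (auto simp: perp_def)

lemma partA: assumes vl: "v \<in> l2" and qv: "qf v = 1"
  shows "cl_class ` centralizer v = cl_class ` even_coset (Vec v) (perp v)"
proof -
  have Up: "l2 \<inter> perp v = perp v" using perp_l2 by auto
  have v2: "vec v * vec v = 1" by (rule vv[OF vl qv])
  have comm: "Pc (perp v) p x \<Longrightarrow> x * vec v = (if p then vec v * x else - (vec v * x))" for p x
    by (rule Pc_comm[OF vl subset_refl])
  show ?thesis
  proof
    show "cl_class ` centralizer v \<subseteq> cl_class ` even_coset (Vec v) (perp v)"
    proof
      fix C assume "C \<in> cl_class ` centralizer v"
      then obtain a where a: "a \<in> centralizer v" "C = cl_class a" by auto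
      have wa: "cl_wf a" and "cl_rel (Mul (Vec v) a) (Mul a (Vec v))"
        using a by (auto simp: centralizer_def)
      then have H: "vec v * abs_cl a = abs_cl a * vec v" by (simp add: cl.abs_eq_iff[symmetric])
      obtain x y where xy: "Pc l2 True x" "Pc l2 False y" "abs_cl a = x + y" using wf_dec[OF wa] by blast
      have D: "Pc l2 p z \<Longrightarrow> \<exists>z0 z1. Pc (perp v) p z0 \<and> Pc (perp v) (\<not> p) z1 \<and> z = z0 + vec v * z1" for p z
      proof -
        have clo: "\<And>w c. w \<in> l2 \<Longrightarrow> (\<lambda>i. w i + c * v i) \<in> l2"
          using l2_add l2_smult[OF vl] by blast
        assume "Pc l2 p z"
        then show ?thesis using Dec[OF vl subset_refl qv clo, of p z] Up by simp
      qed
      obtain x0 x1 where x: "Pc (perp v) True x0" "Pc (perp v) False x1" "x = x0 + vec v * x1"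
        using D[OF xy(1)] by auto
      obtain y0 y1 where y: "Pc (perp v) False y0" "Pc (perp v) True y1" "y = y0 + vec v * y1"
        using D[OF xy(2)] by auto
      have A: "abs_cl a = x0 + vec v * x1 + 1 * (y0 + vec v * y1)" using xy x y by (simp add: add.assoc)
      have "x1 + 1 * (vec v * (if True then y0 else - y0)) = 0"
        by (rule alg_step[where b=True], use v2 comm[OF x(1)] comm[OF y(1)] comm[OF x(2)] comm[OF y(2)] H A in simp_all)
      then have "x1 + vec v * y0 = 0" by simp
      then have "x1 = 0 \<and> y0 = 0"
        by (rule Sep[OF vl qv Pc_psi[OF vl qv subset_refl x(2)] Pc_psi[OF vl qv subset_refl y(1)] psi_v[OF vl qv] v2])
      then have Aa: "abs_cl a = x0 + vec v * y1" using A by simp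
      obtain e0 where e0: "e0 \<in> cl_even (perp v)" "abs_cl e0 = x0" using Pc_even_rep[OF x(1)] by auto
      obtain e1 where e1: "e1 \<in> cl_even (perp v)" "abs_cl e1 = y1" using Pc_even_rep[OF y(2)] by auto
      define b where "b = Add (Mul (Vec v) e1) e0"
      have bE: "b \<in> even_coset (Vec v) (perp v)" unfolding b_def even_coset_def using e0 e1 by blast
      have wb: "cl_wf b" unfolding b_def using vl cl_even_wf[OF e0(1) perp_l2] cl_even_wf[OF e1(1) perp_l2] by simp
      have "abs_cl b = abs_cl a" unfolding b_def using Aa e0 e1 by (simp add: add.commute)
      then have "cl_class a = cl_class b" using class_eq[OF wa wb] by simp
      then show "C \<in> cl_class ` even_coset (Vec v) (perp v)" using a bE by auto
    qed
  next
    show "cl_class ` even_coset (Vec v) (perp v) \<subseteq> cl_class ` centralizer v"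
    proof
      fix C assume "C \<in> cl_class ` even_coset (Vec v) (perp v)"
      then obtain b e0 e1 where b: "C = cl_class b" "b = Add (Mul (Vec v) e1) e0"
        "e1 \<in> cl_even (perp v)" "e0 \<in> cl_even (perp v)"
        unfolding even_coset_def by auto
      have wb: "cl_wf b" using b vl cl_even_wf[OF b(3) perp_l2] cl_even_wf[OF b(4) perp_l2] by simp
      have c0: "abs_cl e0 * vec v = vec v * abs_cl e0" using comm[OF cl_even_Pc[OF b(4)]] by simp
      have c1: "abs_cl e1 * vec v = vec v * abs_cl e1" using comm[OF cl_even_Pc[OF b(3)]] by simp
      have "vec v * abs_cl b = abs_cl b * vec v"
        using b(2) c0 c1 by (simp add: algebra_simps)
      then have "cl_rel (Mul (Vec v) b) (Mul b (Vec v))" by (simp add: cl.abs_eq_iff[symmetric])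
      then have "b \<in> centralizer v" using wb by (simp add: centralizer_def)
      then show "C \<in> cl_class ` centralizer v" using b by auto
    qed
  qed
qed



definition WW :: "nat \<Rightarrow> (nat \<Rightarrow> complex) set" where
  "WW k = l2 \<inter> (\<Inter>i\<in>{0..<k}. perp (unitseq i))"

definition PP :: "nat \<Rightarrow> cl" where
  "PP k = abs_cl (cl_prod (map unitseq [0..<k]))"

lemma u_perp: "i \<noteq> j \<Longrightarrow> unitseq j \<in> perp (unitseq i)"
  by (simp add: perp_def unitseq_l2 bf_unitseq)

lemma WW_0: "WW 0 = l2" by (simp add: WW_def)

lemma WW_l2: "WW k \<subseteq> l2" by (auto simp: WW_def)

lemma WW_perp: "i < k \<Longrightarrow> WW k \<subseteq> perp (unitseq i)" by (auto simp: WW_def)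

lemma WW_u: "unitseq k \<in> WW k"
  by (auto simp: WW_def unitseq_l2 u_perp)

lemma WW_clo: assumes "w \<in> WW k" shows "(\<lambda>i. w i + c * unitseq k i) \<in> WW k"
proof -
  have wl: "w \<in> l2" using assms by (simp add: WW_def)
  have l: "(\<lambda>i. w i + c * unitseq k i) \<in> l2" by (intro l2_add wl l2_smult unitseq_l2)
  have "bf (unitseq i) (\<lambda>ia. w ia + c * unitseq k ia) = 0" if "i < k" for i
  proof -
    have "bf (unitseq i) w = 0" using assms that by (auto simp: WW_def perp_def)
    moreover have "bf (unitseq i) (unitseq k) = 0" using that by (simp add: bf_unitseq)
    ultimately show ?thesis by (simp add: bf_lin unitseq_l2 wl)
  qed
  then show ?thesis using l by (auto simp: WW_def perp_def)
qed

lemma WW_Suc: "WW k \<inter> perp (unitseq k) = WW (Suc k)"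
  by (auto simp: WW_def less_Suc_eq)

lemma PP_0: "PP 0 = 1" by (simp add: PP_def)

lemma PP_Suc: "PP (Suc k) = PP k * vec (unitseq k)"
  by (simp add: PP_def abs_prod_append)

lemma PP_Pc: assumes "k \<le> j" shows "Pc (l2 \<inter> perp (unitseq j)) (even k) (PP k)"
proof -
  have "set (map unitseq [0..<k]) \<subseteq> l2 \<inter> perp (unitseq j)"
  proof
    fix w assume "w \<in> set (map unitseq [0..<k])"
    then obtain i where "i < k" "w = unitseq i" by auto
    moreover then have "j \<noteq> i" using assms by simp
    ultimately show "w \<in> l2 \<inter> perp (unitseq j)" using u_perp[of j i] unitseq_l2 by simp
  qed
  from Pc_prod[OF this] show ?thesis by (simp add: PP_def)
qed

lemma rev_prod: "(\<forall>w\<in>set ws. w \<in> l2 \<and> qf w = 1) \<Longrightarrow>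
    abs_cl (cl_prod (rev ws)) * abs_cl (cl_prod ws) = 1"
proof (induction ws)
  case Nil then show ?case by simp
next
  case (Cons w ws)
  then have v2: "vec w * vec w = 1" by (simp add: vv)
  have "abs_cl (cl_prod (rev (w # ws))) * abs_cl (cl_prod (w # ws))
      = abs_cl (cl_prod (rev ws)) * (vec w * vec w) * abs_cl (cl_prod ws)"
    by (simp add: abs_prod_append mult.assoc)
  then show ?case using Cons v2 by simp
qed

lemma PP_inv: "abs_cl (cl_prod (rev (map unitseq [0..<k]))) * PP k = 1"
  unfolding PP_def by (rule rev_prod) (auto simp: unitseq_l2 qf_unitseq)

lemma PP_psi: assumes "0 < k" shows "psi (unitseq 0) (PP k) = - PP k"
proof -
  have "[0..<k] = 0 # [1..<k]" using assms by (simp add: upt_conv_Cons)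
  then have P: "PP k = vec (unitseq 0) * abs_cl (cl_prod (map unitseq [1..<k]))"
    by (simp add: PP_def)
  have "Pc (perp (unitseq 0)) (even (length (map unitseq [1..<k]))) (abs_cl (cl_prod (map unitseq [1..<k])))"
    by (rule Pc_prod) (auto simp: u_perp)
  then have "psi (unitseq 0) (abs_cl (cl_prod (map unitseq [1..<k]))) = abs_cl (cl_prod (map unitseq [1..<k]))"
    by (rule Pc_psi[OF unitseq_l2 qf_unitseq subset_refl])
  then show ?thesis unfolding P
    by (simp add: psi_mult unitseq_l2 qf_unitseq psi_v)
qed

lemma claimB: "cl_wf a \<Longrightarrow> (\<forall>i<k. vec (unitseq i) * abs_cl a = abs_cl a * vec (unitseq i)) \<Longrightarrow>
  \<exists>x y. Pc (WW k) True x \<and> Pc (WW k) (odd k) y \<and> abs_cl a = x + PP k * y"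
proof (induction k)
  case 0
  then obtain x y where "Pc l2 True x" "Pc l2 False y" "abs_cl a = x + y" using wf_dec by blast
  then show ?case by (simp add: WW_0 PP_0) blast
next
  case (Suc k)
  define v where "v = unitseq k"
  have vl: "v \<in> l2" and qv: "qf v = 1" by (simp_all add: v_def unitseq_l2 qf_unitseq)
  obtain x y where xy: "Pc (WW k) True x" "Pc (WW k) (odd k) y" "abs_cl a = x + PP k * y"
    using Suc by auto
  have H: "vec v * abs_cl a = abs_cl a * vec v" using Suc(3) by (simp add: v_def)
  have D: "Pc (WW k) p z \<Longrightarrow> \<exists>z0 z1. Pc (WW (Suc k)) p z0 \<and> Pc (WW (Suc k)) (\<not> p) z1 \<and> z = z0 + vec v * z1" for p z
    using Dec[OF WW_u WW_l2 qf_unitseq WW_clo, of k p z] by (simp add: WW_Suc v_def)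
  obtain x0 x1 where x: "Pc (WW (Suc k)) True x0" "Pc (WW (Suc k)) False x1" "x = x0 + vec v * x1"
    using D[OF xy(1)] by auto
  obtain y0 y1 where y: "Pc (WW (Suc k)) (odd k) y0" "Pc (WW (Suc k)) (even k) y1" "y = y0 + vec v * y1"
    using D[OF xy(2)] by auto
  have Wp: "WW (Suc k) \<subseteq> perp v" by (simp add: WW_perp v_def)
  have comm: "Pc (WW (Suc k)) p z \<Longrightarrow> z * vec v = (if p then vec v * z else - (vec v * z))" for p z
    by (rule Pc_comm[OF vl Wp])
  have cP: "PP k * vec v = (if even k then vec v * PP k else - (vec v * PP k))"
    unfolding v_def by (rule Pc_comm[OF unitseq_l2 _ PP_Pc]) auto
  have cP': "vec v * PP k = (if even k then PP k * vec v else - (PP k * vec v))"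
    using cP by (cases "even k") auto
  have A: "abs_cl a = x0 + vec v * x1 + PP k * (y0 + vec v * y1)" using xy x y by simp
  have v2: "vec v * vec v = 1" by (rule vv[OF vl qv])
  have step: "x1 + PP k * (vec v * (if even k then y0 else - y0)) = 0"
    by (rule alg_step[where b="even k"], use v2 comm[OF x(1)] comm[OF y(1)] comm[OF x(2)] comm[OF y(2)] H A cP' in simp_all)
  define y0' where "y0' = (if even k then y0 else - y0)"
  have y0'P: "Pc (WW (Suc k)) (odd k) y0'" using y(1) by (cases "even k") (auto simp: y0'_def intro: Pc_neg)
  have s0: "x1 + PP (Suc k) * y0' = 0" using step unfolding PP_Suc v_def[symmetric] y0'_def by (simp add: mult.assoc)
  have W0: "WW (Suc k) \<subseteq> perp (unitseq 0)" by (rule WW_perp) simp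
  have "x1 = 0 \<and> y0' = 0"
    by (rule Sep[OF unitseq_l2 qf_unitseq Pc_psi[OF unitseq_l2 qf_unitseq W0 x(2)]
          Pc_psi[OF unitseq_l2 qf_unitseq W0 y0'P] PP_psi[of "Suc k"] PP_inv s0]) simp
  then have "x1 = 0" "y0 = 0" by (auto simp: y0'_def split: if_splits)
  then have "abs_cl a = x0 + PP (Suc k) * y1" using A by (simp add: PP_Suc mult.assoc v_def)
  then show ?case using x(1) y(2) by auto
qed



lemma PP_comm: assumes "odd n" "i < n" shows "vec (unitseq i) * PP n = PP n * vec (unitseq i)"
proof -
  define v where "v = unitseq i"
  define U where "U = l2 \<inter> perp v"
  define A where "A = abs_cl (cl_prod (map unitseq [0..<i]))"
  define B where "B = abs_cl (cl_prod (map unitseq [Suc i..<n]))"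
  have "[0..<n] = [0..<i] @ [i..<n]" using upt_add_eq_append[of 0 i "n - i"] assms by simp
  also have "[i..<n] = i # [Suc i..<n]" using assms by (simp add: upt_conv_Cons)
  finally have P: "PP n = A * (vec v * B)"
    by (simp add: PP_def A_def B_def v_def abs_prod_append)
  have sA: "set (map unitseq [0..<i]) \<subseteq> U"
    by (auto simp: U_def v_def unitseq_l2 u_perp)
  have sB: "set (map unitseq [Suc i..<n]) \<subseteq> U"
    by (auto simp: U_def v_def unitseq_l2 u_perp)
  have vl: "v \<in> l2" and qv: "qf v = 1" by (simp_all add: v_def unitseq_l2 qf_unitseq)
  have UP: "U \<subseteq> perp v" by (simp add: U_def)
  have cA: "A * vec v = (if even i then vec v * A else - (vec v * A))"
    using Pc_comm[OF vl UP Pc_prod[OF sA]] by (simp add: A_def)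
  have cB: "B * vec v = (if even i then vec v * B else - (vec v * B))"
    using Pc_comm[OF vl UP Pc_prod[OF sB]] assms by (simp add: B_def)
  have v2: "vec v * vec v = 1" by (rule vv[OF vl qv])
  show ?thesis
  proof (cases "even i")
    case True
    then have "vec v * A = A * vec v" "B * vec v = vec v * B" using cA cB by auto
    then have "vec v * (A * (vec v * B)) = A * (vec v * B) * vec v"
      by (metis mult.assoc)
    then show ?thesis using P by (simp add: v_def)
  next
    case False
    then have a: "vec v * A = - (A * vec v)" and b: "B * vec v = - (vec v * B)" using cA cB by auto
    have "vec v * (A * (vec v * B)) = - (A * B)"
      by (metis a v2 mult.assoc mult_1_left mult_minus_left)
    moreover have "A * (vec v * B) * vec v = - (A * B)"
      by (metis b v2 mult.assoc mult_1_left mult_minus_right)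
    ultimately show ?thesis using P by (simp add: v_def)
  qed
qed

lemma partB: assumes n: "odd n"
  shows "cl_class ` (\<Inter>i\<in>{0..<n}. centralizer (unitseq i))
       = cl_class ` even_coset (cl_prod (map unitseq [0..<n])) (\<Inter>i\<in>{0..<n}. perp (unitseq i))"
proof -
  have n0: "0 < n" using n by (rule odd_pos)
  have Weq: "(\<Inter>i\<in>{0..<n}. perp (unitseq i)) = WW n"
  proof
    show "(\<Inter>i\<in>{0..<n}. perp (unitseq i)) \<subseteq> WW n"
    proof
      fix x assume x: "x \<in> (\<Inter>i\<in>{0..<n}. perp (unitseq i))"
      then have "x \<in> perp (unitseq 0)" using n0 by auto
      then have "x \<in> l2" using perp_l2 by auto
      then show "x \<in> WW n" using x by (simp add: WW_def)
    qed
  qed (auto simp: WW_def)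
  have pwf: "cl_wf (cl_prod (map unitseq [0..<n]))" by (rule cl_prod_wf) (auto simp: unitseq_l2)
  have PPabs: "abs_cl (cl_prod (map unitseq [0..<n])) = PP n" by (simp add: PP_def)
  show ?thesis unfolding Weq
  proof
    show "cl_class ` (\<Inter>i\<in>{0..<n}. centralizer (unitseq i)) \<subseteq> cl_class ` even_coset (cl_prod (map unitseq [0..<n])) (WW n)"
    proof
      fix C assume "C \<in> cl_class ` (\<Inter>i\<in>{0..<n}. centralizer (unitseq i))"
      then obtain a where a0: "a \<in> (\<Inter>i\<in>{0..<n}. centralizer (unitseq i))" "C = cl_class a" by blast
      then have a: "\<forall>i<n. a \<in> centralizer (unitseq i)" "C = cl_class a" by auto
      have wa: "cl_wf a" using a n0 by (auto simp: centralizer_def)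
      have H: "\<forall>i<n. vec (unitseq i) * abs_cl a = abs_cl a * vec (unitseq i)"
        using a by (auto simp: centralizer_def cl.abs_eq_iff[symmetric])
      obtain x y where xy: "Pc (WW n) True x" "Pc (WW n) True y" "abs_cl a = x + PP n * y"
        using claimB[OF wa H] n by auto
      obtain e0 where e0: "e0 \<in> cl_even (WW n)" "abs_cl e0 = x" using Pc_even_rep[OF xy(1)] by auto
      obtain e1 where e1: "e1 \<in> cl_even (WW n)" "abs_cl e1 = y" using Pc_even_rep[OF xy(2)] by auto
      define b where "b = Add (Mul (cl_prod (map unitseq [0..<n])) e1) e0"
      have bE: "b \<in> even_coset (cl_prod (map unitseq [0..<n])) (WW n)"
        unfolding b_def even_coset_def using e0 e1 by blast
      have wb: "cl_wf b" unfolding b_def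
        using pwf cl_even_wf[OF e0(1) WW_l2] cl_even_wf[OF e1(1) WW_l2] by simp
      have "abs_cl b = abs_cl a" unfolding b_def using xy e0 e1 PPabs by (simp add: add.commute)
      then have "cl_class a = cl_class b" using class_eq[OF wa wb] by simp
      then show "C \<in> cl_class ` even_coset (cl_prod (map unitseq [0..<n])) (WW n)" using a bE by auto
    qed
  next
    show "cl_class ` even_coset (cl_prod (map unitseq [0..<n])) (WW n) \<subseteq> cl_class ` (\<Inter>i\<in>{0..<n}. centralizer (unitseq i))"
    proof
      fix C assume "C \<in> cl_class ` even_coset (cl_prod (map unitseq [0..<n])) (WW n)"
      then obtain b e0 e1 where b: "C = cl_class b" "b = Add (Mul (cl_prod (map unitseq [0..<n])) e1) e0"
        "e1 \<in> cl_even (WW n)" "e0 \<in> cl_even (WW n)"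
        unfolding even_coset_def by auto
      have wb: "cl_wf b" using b pwf cl_even_wf[OF b(3) WW_l2] cl_even_wf[OF b(4) WW_l2] by simp
      have "b \<in> centralizer (unitseq i)" if i: "i < n" for i
      proof -
        have comm: "Pc (WW n) True z \<Longrightarrow> z * vec (unitseq i) = vec (unitseq i) * z" for z
          using Pc_comm[OF unitseq_l2 WW_perp[OF i]] by simp
        have c0: "abs_cl e0 * vec (unitseq i) = vec (unitseq i) * abs_cl e0"
          by (rule comm[OF cl_even_Pc[OF b(4)]])
        have c1: "abs_cl e1 * vec (unitseq i) = vec (unitseq i) * abs_cl e1"
          by (rule comm[OF cl_even_Pc[OF b(3)]])
        have cp: "vec (unitseq i) * PP n = PP n * vec (unitseq i)" by (rule PP_comm[OF n i])
        have "vec (unitseq i) * (PP n * abs_cl e1) = PP n * abs_cl e1 * vec (unitseq i)"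
          by (metis c1 cp mult.assoc)
        then have "vec (unitseq i) * abs_cl b = abs_cl b * vec (unitseq i)"
          using b(2) c0 PPabs by (simp add: distrib_left distrib_right)
        then have "cl_rel (Mul (Vec (unitseq i)) b) (Mul b (Vec (unitseq i)))"
          by (simp add: cl.abs_eq_iff[symmetric])
        then show ?thesis using wb by (simp add: centralizer_def)
      qed
      then show "C \<in> cl_class ` (\<Inter>i\<in>{0..<n}. centralizer (unitseq i))" using b by auto
    qed
  qed
qed

theorem lemma4:
  shows "(\<forall>v. v \<in> l2 \<and> qf v = 1 \<longrightarrow>
            cl_class ` centralizer v = cl_class ` even_coset (Vec v) (perp v))
       \<and> (\<forall>n::nat. odd n \<longrightarrow>
            cl_class ` (\<Inter>i\<in>{0..<n}. centralizer (unitseq i))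
            = cl_class ` even_coset (cl_prod (map unitseq [0..<n]))
                                    (\<Inter>i\<in>{0..<n}. perp (unitseq i)))"
  using partA partB by blast

end
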